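(* Let $k>0$ and consider the system of ODEs, for $r>0$, $\theta$, $z$, $p_R$, $p_S$ real, \[ \dot r = p_R,\quad \dot\theta = \frac{p_S}{r^2},\quad \dot z = \frac{p_S}{2},\quad \dot p_R = \frac{p_S^2}{r^3} - \frac{2kr^3}{(r^4+16z^2)^{3/2}},\quad \dot p_S = -\frac{8kr^2 z}{(r^4+16z^2)^{3/2}}, \] with $H = \frac{1}{2}\big(p_R^2 + \frac{p_S^2}{r^2}\big) - \frac{k}{\sqrt{r^4+16z^2}}$ (a conserved quantity). If $H<0$, then every solution is bounded, and along it $\sqrt{r^4+16z^2} \le \frac{k}{|H|}$.
   Context: This system describes nonholonomic motion of a point particle on the Heisenberg group $\mathbb{H}^1$ (horizontal distribution spanned by $X=\partial_x-\frac y2\partial_z$, $Y=\partial_y+\frac x2\partial_z$, sub-Riemannian metric $dx^2+dy^2$) in the potential $U=-k/\sqrt{(x^2+y^2)^2+16z^2}$, written in cylindrical coordinates $x=r\cos\theta$, $y=r\sin\theta$; $p_R,p_S$ are the momenta with respect to the horizontal frame $R=\partial_r$, $S=\partial_\theta+\frac{r^2}{2}\partial_z$. *)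

theory Defs
  imports "HOL-Analysis.Analysis"
begin

definition heis_H :: "real \<Rightarrow> real \<Rightarrow> real \<Rightarrow> real \<Rightarrow> real \<Rightarrow> real" where
  "heis_H k r z pR pS = (pR\<^sup>2 + pS\<^sup>2 / r\<^sup>2) / 2 - k / sqrt (r ^ 4 + 16 * z\<^sup>2)"

end

theory Submission
  imports Defs
begin

lemma heis_deriv:
  assumes r0: "r t > 0"
  and dr: "(r has_real_derivative a) (at t)"
  and dz: "(z has_real_derivative b) (at t)"
  and dp: "(pR has_real_derivative c) (at t)"
  and dq: "(pS has_real_derivative d) (at t)"
  shows "((\<lambda>t. heis_H k (r t) (z t) (pR t) (pS t)) has_real_derivative
     ((of_nat 2 * (c * pR t ^ (2 - Suc 0)) + ((of_nat 2 * (d * pS t ^ (2 - Suc 0))) * (r t)^2 - (pS t)^2 * (of_nat 2 * (a * r t ^ (2 - Suc 0)))) / ((r t)^2 * (r t)^2)) / 2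
     - (0 * sqrt (r t ^ 4 + 16 * (z t)\<^sup>2) - k * ((4 * r t ^ 3 * a + 32 * z t * b) / (2 * sqrt (r t ^ 4 + 16 * (z t)\<^sup>2))))
        / (sqrt (r t ^ 4 + 16 * (z t)\<^sup>2) * sqrt (r t ^ 4 + 16 * (z t)\<^sup>2))))
     (at t)"
proof -
  have q: "r t ^ 4 + 16 * (z t)\<^sup>2 > 0" using r0 by (simp add: add_pos_nonneg)
  have ds0: "((\<lambda>t. r t ^ 4 + 16 * (z t)\<^sup>2) has_real_derivative (4 * r t ^ 3 * a + 32 * z t * b)) (at t)"
    apply (rule refl derivative_eq_intros dr dz)+
    apply simp
    done
  have ds: "((\<lambda>t. sqrt (r t ^ 4 + 16 * (z t)\<^sup>2)) has_real_derivative
      (4 * r t ^ 3 * a + 32 * z t * b) / (2 * sqrt (r t ^ 4 + 16 * (z t)\<^sup>2))) (at t)"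
    using DERIV_chain2[OF DERIV_real_sqrt[OF q] ds0] by (simp add: field_simps)
  have r2: "(r t)^2 \<noteq> 0" using r0 by simp
  have s0: "sqrt (r t ^ 4 + 16 * (z t)\<^sup>2) \<noteq> 0" using q by simp
  note p1 = DERIV_power[OF dp, of 2]
  note p2 = DERIV_divide[OF DERIV_power[OF dq, of 2] DERIV_power[OF dr, of 2] r2]
  note p3 = DERIV_cdivide[OF DERIV_add[OF p1 p2], of 2]
  note p4 = DERIV_divide[OF DERIV_const ds s0, of k]
  note p5 = DERIV_diff[OF p3 p4]
  show ?thesis unfolding heis_H_def using p5 by simp
qed
lemma alg:
  fixes R Z P S s k :: real
  assumes R: "R > 0" and s: "s > 0"
  shows "(of_nat 2 * ((S\<^sup>2 / R ^ 3 - 2 * k * R ^ 3 / s ^ 3) * P ^ (2 - Suc 0)) + ((of_nat 2 * ((- (8 * k * R\<^sup>2 * Z) / s ^ 3) * S ^ (2 - Suc 0))) * R^2 - S^2 * (of_nat 2 * (P * R ^ (2 - Suc 0)))) / (R^2 * R^2)) / 2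
     - (0 * s - k * ((4 * R ^ 3 * P + 32 * Z * (S / 2)) / (2 * s)))
        / (s * s) = 0"
  using R s by (simp add: field_simps) algebra

theorem theorem1:
  fixes k :: real and I :: "real set" and t0 :: real
    and r th z pR pS :: "real \<Rightarrow> real"
  assumes k: "k > 0"
    and I: "open I" "is_interval I" "t0 \<in> I"
    and rpos: "\<And>t. t \<in> I \<Longrightarrow> r t > 0"
    and dr: "\<And>t. t \<in> I \<Longrightarrow> (r has_real_derivative pR t) (at t)"
    and dth: "\<And>t. t \<in> I \<Longrightarrow> (th has_real_derivative pS t / (r t)\<^sup>2) (at t)"
    and dz: "\<And>t. t \<in> I \<Longrightarrow> (z has_real_derivative pS t / 2) (at t)"
    and dpR: "\<And>t. t \<in> I \<Longrightarrow> (pR has_real_derivative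
               (pS t)\<^sup>2 / (r t) ^ 3 - 2 * k * (r t) ^ 3 / (sqrt ((r t) ^ 4 + 16 * (z t)\<^sup>2)) ^ 3) (at t)"
    and dpS: "\<And>t. t \<in> I \<Longrightarrow> (pS has_real_derivative
               - (8 * k * (r t)\<^sup>2 * z t) / (sqrt ((r t) ^ 4 + 16 * (z t)\<^sup>2)) ^ 3) (at t)"
    and Hneg: "heis_H k (r t0) (z t0) (pR t0) (pS t0) < 0"
  shows "bounded (r ` I) \<and> bounded (z ` I) \<and>
         (\<forall>t\<in>I. sqrt ((r t) ^ 4 + 16 * (z t)\<^sup>2)
                  \<le> k / \<bar>heis_H k (r t0) (z t0) (pR t0) (pS t0)\<bar>)"
proof -
  define rho where "rho t = sqrt ((r t) ^ 4 + 16 * (z t)\<^sup>2)" for t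
  define G where "G t = heis_H k (r t) (z t) (pR t) (pS t)" for t
  have rhopos: "rho t > 0" if "t \<in> I" for t
    using rpos[OF that] unfolding rho_def by (simp add: add_pos_nonneg)
  have dG: "(G has_real_derivative 0) (at t within I)" if t: "t \<in> I" for t
  proof -
    have r0: "r t > 0" using rpos[OF t] .
    have s0: "sqrt ((r t) ^ 4 + 16 * (z t)\<^sup>2) > 0" using r0 by (simp add: add_pos_nonneg)
    have "(G has_real_derivative 0) (at t)"
      using heis_deriv[OF r0 dr[OF t] dz[OF t] dpR[OF t] dpS[OF t], of k]
      unfolding alg[OF r0 s0, where S="pS t" and k=k and Z="z t" and P="pR t"] G_def[abs_def] .
    thus ?thesis by (rule has_field_derivative_at_within)
  qed
  have conv: "convex I" using I(2) by (simp add: is_interval_convex)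
  obtain c where c: "\<And>t. t \<in> I \<Longrightarrow> G t = c"
    using has_field_derivative_zero_constant[OF conv dG] by blast
  define B where "B = k / \<bar>G t0\<bar>"
  have Gt0: "G t0 < 0" using Hneg unfolding G_def .
  have bnd: "rho t \<le> B" if t: "t \<in> I" for t
  proof -
    have "G t = G t0" using c t I(3) by simp
    hence e: "G t0 = ((pR t)\<^sup>2 + (pS t)\<^sup>2 / (r t)\<^sup>2) / 2 - k / rho t"
      unfolding G_def heis_H_def rho_def by simp
    have "((pR t)\<^sup>2 + (pS t)\<^sup>2 / (r t)\<^sup>2) / 2 \<ge> 0" by simp
    hence "- k / rho t \<le> G t0" using e by simp
    hence "k / rho t \<ge> \<bar>G t0\<bar>" using Gt0 by simp
    thus ?thesis unfolding B_def using rhopos[OF t] Gt0 k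
      by (simp add: field_simps)
  qed
  have r4: "(r t)^4 \<le> B^2" and z2: "16 * (z t)^2 \<le> B^2" if t: "t \<in> I" for t
  proof -
    have "(rho t)^2 \<le> B^2" using bnd[OF t] rhopos[OF t] by (simp add: power_mono)
    moreover have "(rho t)^2 = (r t) ^ 4 + 16 * (z t)\<^sup>2" unfolding rho_def
      by (simp add: add_nonneg_nonneg)
    moreover have "0 < (r t)^4" using rpos[OF t] by simp
    moreover have "0 \<le> (z t)^2" by simp
    ultimately show "(r t)^4 \<le> B^2" "16 * (z t)^2 \<le> B^2" by linarith+
  qed
  have "bounded (r ` I)"
    unfolding bounded_iff
  proof (intro exI ballI)
    fix x assume "x \<in> r ` I"
    then obtain t where t: "t \<in> I" "x = r t" by blast
    have "\<bar>r t\<bar> \<le> 1 + B^2"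
    proof (cases "\<bar>r t\<bar> \<le> 1")
      case False
      hence "\<bar>r t\<bar>^1 \<le> \<bar>r t\<bar>^4" by (intro power_increasing) auto
      moreover have "\<bar>r t\<bar>^4 = (r t)^4" by (simp add: power_abs)
      ultimately show ?thesis using r4[OF t(1)] by simp
    next
      case True
      moreover have "0 \<le> B^2" by simp
      ultimately show ?thesis by linarith
    qed
    thus "norm x \<le> 1 + B^2" using t by simp
  qed
  moreover have "bounded (z ` I)"
    unfolding bounded_iff
  proof (intro exI ballI)
    fix x assume "x \<in> z ` I"
    then obtain t where t: "t \<in> I" "x = z t" by blast
    have "0 \<le> (\<bar>z t\<bar> - 1)^2" by simp
    hence "\<bar>z t\<bar> \<le> 1 + (z t)^2" by (simp add: power2_eq_square algebra_simps abs_mult_self_eq)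
    moreover have "(z t)^2 \<le> B^2" using z2[OF t(1)] zero_le_power2[of "z t"] by linarith
    ultimately show "norm x \<le> 1 + B^2" using t by simp
  qed
  moreover have "\<forall>t\<in>I. sqrt ((r t) ^ 4 + 16 * (z t)\<^sup>2) \<le> k / \<bar>heis_H k (r t0) (z t0) (pR t0) (pS t0)\<bar>"
    using bnd unfolding rho_def B_def G_def by simp
  ultimately show ?thesis by blast
qed

end
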